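(* Let $n\ge 1$ and, for each $j\in\{1,\dots,n\}$, let $(P_j(k))_{k\in\mathbb{N}_0}$ be a probability distribution on the nonnegative integers (the degree distribution of the contact tree $\mathcal{T}_j$) with finite mean $\mathbb{E}(k_j)=\sum_k kP_j(k)$ and finite standard deviation $\sigma(k_j)=\sqrt{\mathbb{E}(k_j^2)-\mathbb{E}(k_j)^2}$, and assume $\sum_{l=1}^n\mathbb{E}(k_l)>0$. Let $T_j\in[0,1]$ be the probability of transmitting the disease along an edge of $\mathcal{T}_j$, and suppose a fraction $Q\in[0,1]$ of all infected individuals is completely isolated and transmits to no one. Then the basic reproduction number $R_0$ (defined in the context) equals $$R_0=(1-Q)\sum_{j=1}^n T_j\left(\mathbb{E}(k_j)\left(1-\frac{1}{\sum_{l=1}^n\mathbb{E}(k_l)}\right)+\frac{\sigma(k_j)^2}{\sum_{l=1}^n\mathbb{E}(k_l)}\right).$$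
   Context: Model: a population's contacts are split into $n$ types; a randomly chosen individual has $k_i$ contacts of type $i$ with probability $\prod_i P_i(k_i)$ (independent types). The ramification distribution (number of further contacts of each type of an individual reached by following a randomly chosen contact) is $$\tilde P(k_1,\dots,k_n)=\frac{\sum_{l=1}^n (k_l+1)P_l(k_l+1)\prod_{i\neq l}P_i(k_i)}{\sum_{l=1}^n\mathbb{E}(k_l)}.$$ For an individual with ramification $(k_1,\dots,k_n)$, the expected number of individuals it infects is $$a_{k_1\dots k_n}=(1-Q)\sum_{m_1=0}^{k_1}\cdots\sum_{m_n=0}^{k_n}(m_1+\dots+m_n)\prod_{i=1}^n\binom{k_i}{m_i}T_i^{m_i}(1-T_i)^{k_i-m_i},$$ and the basic reproduction number is $R_0=\sum_{k_1,\dots,k_n\ge0}\tilde P(k_1,\dots,k_n)\,a_{k_1\dots k_n}$. *)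

theory Defs
  imports "HOL-Analysis.Analysis"
begin

text \<open>Contact types are indexed by 0,...,n-1 (paper: 1,...,n).
  P j k is the probability that an individual has k contacts of type j.
  Degree vectors are extensional functions on {..<n}.\<close>

definition mean_deg :: "(nat \<Rightarrow> nat \<Rightarrow> real) \<Rightarrow> nat \<Rightarrow> real" where
  "mean_deg P j = (\<Sum>k. real k * P j k)"

definition second_moment :: "(nat \<Rightarrow> nat \<Rightarrow> real) \<Rightarrow> nat \<Rightarrow> real" where
  "second_moment P j = (\<Sum>k. (real k)^2 * P j k)"

definition std_dev :: "(nat \<Rightarrow> nat \<Rightarrow> real) \<Rightarrow> nat \<Rightarrow> real" where
  "std_dev P j = sqrt (second_moment P j - (mean_deg P j)^2)"

definition ramification ::
  "nat \<Rightarrow> (nat \<Rightarrow> nat \<Rightarrow> real) \<Rightarrow> (nat \<Rightarrow> nat) \<Rightarrow> real" where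
  "ramification n P k =
     (\<Sum>l<n. real (k l + 1) * P l (k l + 1) * (\<Prod>i\<in>{..<n} - {l}. P i (k i)))
     / (\<Sum>l<n. mean_deg P l)"

definition infected_mean ::
  "nat \<Rightarrow> (nat \<Rightarrow> real) \<Rightarrow> real \<Rightarrow> (nat \<Rightarrow> nat) \<Rightarrow> real" where
  "infected_mean n T Q k =
     (1 - Q) * (\<Sum>m\<in>(\<Pi>\<^sub>E i\<in>{..<n}. {..k i}).
        real (\<Sum>i<n. m i) *
        (\<Prod>i<n. real (k i choose m i) * T i ^ m i * (1 - T i) ^ (k i - m i)))"

definition R0 ::
  "nat \<Rightarrow> (nat \<Rightarrow> nat \<Rightarrow> real) \<Rightarrow> (nat \<Rightarrow> real) \<Rightarrow> real \<Rightarrow> real" where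
  "R0 n P T Q =
     infsum (\<lambda>k. ramification n P k * infected_mean n T Q k) ({..<n} \<rightarrow>\<^sub>E (UNIV :: nat set))"

end

theory Submission
  imports Defs
begin

lemma has_sum_finsum:
  fixes f :: "'i \<Rightarrow> 'a \<Rightarrow> real"
  assumes "finite I" "\<And>i. i \<in> I \<Longrightarrow> (f i has_sum s i) A"
  shows "((\<lambda>x. \<Sum>i\<in>I. f i x) has_sum (\<Sum>i\<in>I. s i)) A"
  using assms by (induction I rule: finite_induct) (auto intro: has_sum_add)

lemma has_sum_prod_PiE_nonneg:
  fixes f :: "'i \<Rightarrow> nat \<Rightarrow> real"
  assumes fin: "finite A" and nn: "\<And>x y. x \<in> A \<Longrightarrow> f x y \<ge> 0"
    and sm: "\<And>x. x \<in> A \<Longrightarrow> f x summable_on UNIV"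
  shows "((\<lambda>g. \<Prod>x\<in>A. f x (g x)) has_sum (\<Prod>x\<in>A. infsum (f x) UNIV)) (PiE A (\<lambda>_. UNIV))"
proof -
  have abs: "Infinite_Sum.abs_summable_on (f x) UNIV" if "x \<in> A" for x
    using sm[OF that] by (rule summable_on_iff_abs_summable_on_real[THEN iffD1])
  have "Infinite_Sum.abs_summable_on (\<lambda>g. \<Prod>x\<in>A. f x (g x)) (PiE A (\<lambda>_. UNIV))"
  proof -
    have old: "Infinite_Set_Sum.abs_summable_on (f x) UNIV" if "x \<in> A" for x
      using abs_summable_equivalent[THEN iffD1, OF abs[OF that]] .
    have "Infinite_Set_Sum.abs_summable_on (\<lambda>g. \<Prod>x\<in>A. f x (g x)) (PiE A (\<lambda>_. UNIV))"
      by (rule abs_summable_on_prod_PiE[OF fin]) (simp_all add: old)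
    then show ?thesis by (rule abs_summable_equivalent[THEN iffD2])
  qed
  then have "(\<lambda>g. \<Prod>x\<in>A. f x (g x)) summable_on (PiE A (\<lambda>_. UNIV))"
    by (rule summable_on_iff_abs_summable_on_real[THEN iffD2])
  moreover have "infsum (\<lambda>g. \<Prod>x\<in>A. f x (g x)) (PiE A (\<lambda>_. UNIV)) = (\<Prod>x\<in>A. infsum (f x) UNIV)"
    by (rule infsum_prod_PiE_abs[OF fin]) (rule abs)
  ultimately show ?thesis by (simp add: has_sum_iff)
qed

lemma sums_has_sum_nonneg:
  fixes f :: "nat \<Rightarrow> real"
  assumes "\<And>x. f x \<ge> 0" "f sums s"
  shows "(f has_sum s) UNIV"
  using assms by (intro norm_summable_imp_has_sum) (auto simp: sums_iff)

lemma binom_sum1: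
  fixes t :: real
  shows "(\<Sum>x\<le>k. real (k choose x) * t ^ x * (1 - t) ^ (k - x)) = 1"
  using binomial_ring[of t "1 - t" k] by (simp add: mult.commute mult.left_commute)

lemma binom_mean:
  fixes t :: real
  shows "(\<Sum>x\<le>k. real x * (real (k choose x) * t ^ x * (1 - t) ^ (k - x))) = real k * t"
proof (cases k)
  case 0 then show ?thesis by simp
next
  case (Suc k')
  have "(\<Sum>x\<le>k. real x * (real (k choose x) * t ^ x * (1 - t) ^ (k - x)))
      = (\<Sum>x\<le>k'. real (Suc x) * (real (Suc k' choose Suc x) * t ^ Suc x * (1 - t) ^ (k' - x)))"
    unfolding Suc sum.atMost_Suc_shift by simp
  also have "\<dots> = (\<Sum>x\<le>k'. real (Suc k') * t * (real (k' choose x) * t ^ x * (1 - t) ^ (k' - x)))"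
  proof (rule sum.cong[OF refl])
    fix x
    have "real (Suc x) * real (Suc k' choose Suc x) = real (Suc k') * real (k' choose x)"
      using Suc_times_binomial[of x k'] by (metis of_nat_mult)
    note eq = this
    have "real (Suc x) * (real (Suc k' choose Suc x) * t ^ Suc x * (1 - t) ^ (k' - x)) =
      (real (Suc x) * real (Suc k' choose Suc x)) * t * (t ^ x * (1 - t) ^ (k' - x))"
      by (simp add: mult_ac)
    also have "\<dots> = (real (Suc k') * real (k' choose x)) * t * (t ^ x * (1 - t) ^ (k' - x))"
      by (simp only: eq)
    also have "\<dots> = real (Suc k') * t * (real (k' choose x) * t ^ x * (1 - t) ^ (k' - x))"
      by (simp add: mult_ac)
    finally show "real (Suc x) * (real (Suc k' choose Suc x) * t ^ Suc x * (1 - t) ^ (k' - x)) =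
      real (Suc k') * t * (real (k' choose x) * t ^ x * (1 - t) ^ (k' - x))" .
  qed
  also have "\<dots> = real k * t"
    by (simp add: sum_distrib_left[symmetric] binom_sum1 Suc)
  finally show ?thesis .
qed

lemma infected_mean_eq:
  "infected_mean n T Q k = (1 - Q) * (\<Sum>j<n. T j * real (k j))"
proof -
  define b where "b i x = real (k i choose x) * T i ^ x * (1 - T i) ^ (k i - x)" for i x
  have "(\<Sum>m\<in>(\<Pi>\<^sub>E i\<in>{..<n}. {..k i}). real (\<Sum>i<n. m i) * (\<Prod>i<n. b i (m i)))
      = (\<Sum>m\<in>(\<Pi>\<^sub>E i\<in>{..<n}. {..k i}). \<Sum>j<n. \<Prod>i<n. b i (m i) * (if i = j then real (m i) else 1))"
  proof (rule sum.cong[OF refl])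
    fix m
    have "\<And>j. j < n \<Longrightarrow> (\<Prod>i<n. b i (m i) * (if i = j then real (m i) else 1)) = real (m j) * (\<Prod>i<n. b i (m i))"
      by (simp add: prod.distrib prod.delta)
    then show "real (\<Sum>i<n. m i) * (\<Prod>i<n. b i (m i)) = (\<Sum>j<n. \<Prod>i<n. b i (m i) * (if i = j then real (m i) else 1))"
      by (simp add: sum_distrib_right)
  qed
  also have "\<dots> = (\<Sum>j<n. \<Sum>m\<in>(\<Pi>\<^sub>E i\<in>{..<n}. {..k i}). \<Prod>i<n. b i (m i) * (if i = j then real (m i) else 1))"
    by (rule sum.swap)
  also have "\<dots> = (\<Sum>j<n. \<Prod>i<n. \<Sum>x\<le>k i. b i x * (if i = j then real x else 1))"
    by (rule sum.cong[OF refl], rule prod_sum_PiE[symmetric]) auto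
  also have "\<dots> = (\<Sum>j<n. \<Prod>i<n. (if i = j then real (k j) * T j else 1))"
  proof (intro sum.cong[OF refl] prod.cong[OF refl])
    fix j i
    show "(\<Sum>x\<le>k i. b i x * (if i = j then real x else 1)) = (if i = j then real (k j) * T j else 1)"
      using binom_mean[of "k i" "T i"] binom_sum1[of "k i" "T i"]
      by (auto simp: b_def mult.commute)
  qed
  also have "\<dots> = (\<Sum>j<n. T j * real (k j))"
    by (simp add: prod.delta mult.commute)
  finally show ?thesis unfolding infected_mean_def b_def by simp
qed

theorem theorem1p2:
  fixes n :: nat and P :: "nat \<Rightarrow> nat \<Rightarrow> real" and T :: "nat \<Rightarrow> real" and Q :: real
  assumes "n \<ge> 1"
    and "\<And>j k. j < n \<Longrightarrow> P j k \<ge> 0"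
    and "\<And>j. j < n \<Longrightarrow> (\<lambda>k. P j k) sums 1"
    and "\<And>j. j < n \<Longrightarrow> summable (\<lambda>k. real k * P j k)"
    and "\<And>j. j < n \<Longrightarrow> summable (\<lambda>k. (real k)^2 * P j k)"
    and "(\<Sum>l<n. mean_deg P l) > 0"
    and "\<And>j. j < n \<Longrightarrow> 0 \<le> T j \<and> T j \<le> 1"
    and "0 \<le> Q" and "Q \<le> 1"
  shows "R0 n P T Q =
    (1 - Q) * (\<Sum>j<n. T j * (mean_deg P j * (1 - 1 / (\<Sum>l<n. mean_deg P l))
                              + (std_dev P j)^2 / (\<Sum>l<n. mean_deg P l)))"
proof -
  note Pnn = assms(2)
  define E where "E j = mean_deg P j" for j
  define M where "M j = second_moment P j" for j
  define S where "S = (\<Sum>l<n. E l)"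
  have Spos: "S > 0" using assms(6) by (simp add: S_def E_def)
  have sP: "(\<lambda>k. P j k) sums 1" if "j < n" for j using assms(3) that .
  have sE: "(\<lambda>k. real k * P j k) sums E j" if "j < n" for j
    using summable_sums[OF assms(4)[OF that]] by (simp add: E_def mean_deg_def)
  have sM: "(\<lambda>k. (real k)^2 * P j k) sums M j" if "j < n" for j
    using summable_sums[OF assms(5)[OF that]] by (simp add: M_def second_moment_def)
  have sE1: "(\<lambda>x. real (x+1) * P j (x+1)) sums E j" if "j < n" for j
    using sums_Suc_iff[of "\<lambda>k. real k * P j k" "E j"] sE[OF that] by simp
  have sM1: "(\<lambda>x. real (x+1) * P j (x+1) * real x) sums (M j - E j)" if "j < n" for j
  proof -
    have "(\<lambda>k. (real k)^2 * P j k - real k * P j k) sums (M j - E j)"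
      using sums_diff[OF sM[OF that] sE[OF that]] .
    then have "(\<lambda>x. (real (Suc x))^2 * P j (Suc x) - real (Suc x) * P j (Suc x)) sums (M j - E j)"
      using sums_Suc_iff[of "\<lambda>k. (real k)^2 * P j k - real k * P j k" "M j - E j"] by simp
    then show ?thesis by (simp add: power2_eq_square algebra_simps)
  qed
  have var: "M j - (E j)^2 \<ge> 0" if "j < n" for j
  proof -
    have "(\<lambda>k. (real k)^2 * P j k - 2 * E j * (real k * P j k) + (E j)^2 * P j k) sums
           (M j - 2 * E j * E j + (E j)^2 * 1)"
      by (intro sums_add sums_diff sums_mult sM sE sP that)
    moreover have "(\<lambda>k. (real k)^2 * P j k - 2 * E j * (real k * P j k) + (E j)^2 * P j k)
       = (\<lambda>k. (real k - E j)^2 * P j k)"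
      by (auto simp: fun_eq_iff power2_eq_square algebra_simps)
    ultimately have s: "(\<lambda>k. (real k - E j)^2 * P j k) sums (M j - (E j)^2)"
      by (simp add: power2_eq_square)
    have nn: "\<And>k. (real k - E j)^2 * P j k \<ge> 0" using Pnn[OF that] by simp
    show ?thesis by (rule sums_le[OF _ sums_zero s]) (rule nn)
  qed
  have sd: "(std_dev P j)^2 = M j - (E j)^2" if "j < n" for j
    using var[OF that] by (simp add: std_dev_def M_def E_def)
  define g where "g l j i x = (if i = l then real (x+1) * P l (x+1) else P i x) * (if i = j then real x else 1)"
    for l j i x
  define v where "v l j i = (if i = l then (if i = j then M l - E l else E l) else if i = j then E j else 1)"
    for l j i
  have ghas: "(g l j i has_sum v l j i) UNIV" if "i < n" for l j i
  proof -
    have "g l j i sums v l j i"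
    proof -
      have gf: "g l j i = (\<lambda>x. (if i = l then real (x+1) * P l (x+1) else P i x) * (if i = j then real x else 1))"
        by (simp add: g_def fun_eq_iff)
      have sE': "(\<lambda>x. P i x * real x) sums E i"
        using sE[OF that] by (simp add: mult.commute)
      show ?thesis
        using sP[OF that] sE' sE1[OF that] sM1[OF that] unfolding gf v_def
        by (cases "i = l"; cases "i = j") simp_all
    qed
    moreover have "g l j i x \<ge> 0" for x using Pnn[OF that] by (auto simp: g_def)
    ultimately show ?thesis by (intro sums_has_sum_nonneg) auto
  qed
  have prodv: "(\<Prod>i<n. v l j i) = E l * E j + (if l = j then M l - E l - E l * E l else 0)"
    if "l < n" "j < n" for l j
  proof (cases "l = j")
    case True
    then have "(\<Prod>i<n. v l j i) = (\<Prod>i<n. if i = l then M l - E l else 1)"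
      by (intro prod.cong) (auto simp: v_def)
    then show ?thesis using True that by (simp add: prod.delta)
  next
    case False
    then have "(\<Prod>i<n. v l j i) = (\<Prod>i<n. (if i = l then E l else 1) * (if i = j then E j else 1))"
      by (intro prod.cong) (auto simp: v_def)
    then show ?thesis using False that by (simp add: prod.distrib prod.delta)
  qed
  have summand: "ramification n P k * infected_mean n T Q k =
      (1 - Q) / S * (\<Sum>l<n. \<Sum>j<n. T j * (\<Prod>i<n. g l j i (k i)))" for k
  proof -
    have A: "(\<Prod>i<n. g l j i (k i)) = real (k l + 1) * P l (k l + 1) * (\<Prod>i\<in>{..<n} - {l}. P i (k i)) * real (k j)"
      if "l < n" "j < n" for l j
    proof -
      have "(\<Prod>i<n. g l j i (k i)) = (\<Prod>i<n. (if i = l then real (k l + 1) * P l (k l + 1) else P i (k i)))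
             * (\<Prod>i<n. (if i = j then real (k i) else 1))"
        unfolding prod.distrib[symmetric] by (intro prod.cong refl) (simp add: g_def)
      also have "(\<Prod>i<n. (if i = j then real (k i) else 1)) = real (k j)"
        using that by (simp add: prod.delta)
      also have "(\<Prod>i<n. (if i = l then real (k l + 1) * P l (k l + 1) else P i (k i)))
          = real (k l + 1) * P l (k l + 1) * (\<Prod>i\<in>{..<n} - {l}. P i (k i))"
        using that by (subst prod.remove[of _ l]) (auto intro!: prod.cong)
      finally show ?thesis .
    qed
    have "(\<Sum>l<n. \<Sum>j<n. T j * (\<Prod>i<n. g l j i (k i)))
        = (\<Sum>l<n. \<Sum>j<n. (real (k l + 1) * P l (k l + 1) * (\<Prod>i\<in>{..<n} - {l}. P i (k i))) * (T j * real (k j)))"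
      by (intro sum.cong refl) (simp add: A)
    also have "\<dots> = (\<Sum>l<n. real (k l + 1) * P l (k l + 1) * (\<Prod>i\<in>{..<n} - {l}. P i (k i))) * (\<Sum>j<n. T j * real (k j))"
      by (rule sum_product[symmetric])
    finally show ?thesis
      unfolding ramification_def infected_mean_eq
      by (simp add: S_def E_def)
  qed
  define C where "C l j = E l * E j + (if l = j then M l - E l - E l * E l else 0)" for l j
  have has: "((\<lambda>k. ramification n P k * infected_mean n T Q k) has_sum
      ((1 - Q) / S * (\<Sum>l<n. \<Sum>j<n. T j * C l j))) ({..<n} \<rightarrow>\<^sub>E (UNIV :: nat set))"
    unfolding summand
  proof (intro has_sum_cmult_right has_sum_finsum finite_lessThan)
    fix l j assume l: "l \<in> {..<n}" and j: "j \<in> {..<n}"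
    have "((\<lambda>k. \<Prod>i\<in>{..<n}. g l j i (k i)) has_sum (\<Prod>i\<in>{..<n}. infsum (g l j i) UNIV))
        ({..<n} \<rightarrow>\<^sub>E (UNIV :: nat set))"
    proof (rule has_sum_prod_PiE_nonneg)
      show "g l j i y \<ge> 0" if "i \<in> {..<n}" for i y using Pnn[of i] that by (auto simp: g_def)
      show "g l j i summable_on UNIV" if "i \<in> {..<n}" for i
        using ghas[of i l j] that has_sum_imp_summable by auto
    qed simp
    moreover have "(\<Prod>i\<in>{..<n}. infsum (g l j i) UNIV) = C l j"
    proof -
      have "(\<Prod>i\<in>{..<n}. infsum (g l j i) UNIV) = (\<Prod>i<n. v l j i)"
        using ghas by (intro prod.cong) (auto simp: has_sum_iff)
      then show ?thesis using prodv l j by (simp add: C_def)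
    qed
    ultimately show "((\<lambda>k. (\<Prod>i<n. g l j i (k i))) has_sum C l j) ({..<n} \<rightarrow>\<^sub>E UNIV)"
      by simp
  qed
  then have R: "R0 n P T Q = (1 - Q) / S * (\<Sum>l<n. \<Sum>j<n. T j * C l j)"
    unfolding R0_def by (simp add: has_sum_iff)
  have colsum: "(\<Sum>l<n. C l j) = S * E j + (M j - E j - E j * E j)" if "j < n" for j
    using that by (simp add: C_def sum.distrib S_def sum_distrib_right sum.delta')
  have "(\<Sum>l<n. \<Sum>j<n. T j * C l j) = (\<Sum>j<n. T j * (S * E j + (M j - E j - E j * E j)))"
    by (subst sum.swap) (simp add: sum_distrib_left[symmetric] colsum)
  then have R2: "R0 n P T Q = (1 - Q) * (\<Sum>j<n. T j * (S * E j + (M j - E j - E j * E j)) / S)"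
    using R by (simp add: sum_divide_distrib sum_distrib_left)
  show ?thesis
    unfolding R2
  proof (intro arg_cong[where f="\<lambda>x. (1 - Q) * x"] sum.cong refl)
    fix x assume "x \<in> {..<n}"
    then have x: "x < n" by simp
    show "T x * (S * E x + (M x - E x - E x * E x)) / S =
          T x * (mean_deg P x * (1 - 1 / (\<Sum>l<n. mean_deg P l)) + (std_dev P x)\<^sup>2 / (\<Sum>l<n. mean_deg P l))"
      unfolding sd[OF x] E_def[symmetric] S_def[symmetric] using Spos
      by (simp add: field_simps power2_eq_square)
  qed
qed

end
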